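(* There are 3-SAT formulas $f,f'$ such that their literal-clause graphs are isomorphic, but $f$ is satisfiable and $f'$ is not.
   Context: A 3-SAT formula is a CNF formula (a set of clauses, each a set of at most 3 literals). The literal-clause graph of a CNF formula on variables $x_1,\dots,x_n$ is the unlabeled bipartite graph with the $2n$ literals $x_i,\neg x_i$ on one side, one vertex per clause on the other side, and an edge between literal $\ell$ and clause $c$ iff $\ell\in c$ (no edges between a literal and its negation). *)

theory Defs
  imports Main
begin

text \<open>A literal is a pair (i, b): (i, True) is x_i and (i, False) is the negation of x_i.\<close>
type_synonym lit = "nat \<times> bool"
type_synonym clause = "lit set"

type_synonym cnf = "nat \<times> clause set"

definition lits :: "nat \<Rightarrow> lit set" where
  "lits n = {1..n} \<times> UNIV"

definition is_3sat :: "cnf \<Rightarrow> bool" where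
  "is_3sat F \<longleftrightarrow> finite (snd F) \<and>
     (\<forall>c \<in> snd F. c \<subseteq> lits (fst F) \<and> card c \<le> 3)"

definition satisfiable :: "cnf \<Rightarrow> bool" where
  "satisfiable F \<longleftrightarrow> (\<exists>\<sigma> :: nat \<Rightarrow> bool. \<forall>c \<in> snd F. \<exists>(i, b) \<in> c. \<sigma> i = b)"

definition lc_vertices :: "cnf \<Rightarrow> (lit + clause) set" where
  "lc_vertices F = Inl ` lits (fst F) \<union> Inr ` snd F"

definition lc_adj :: "(lit + clause) \<Rightarrow> (lit + clause) \<Rightarrow> bool" where
  "lc_adj u v \<longleftrightarrow> (\<exists>l c. ((u = Inl l \<and> v = Inr c) \<or> (u = Inr c \<and> v = Inl l)) \<and> l \<in> c)"

definition lc_isomorphic :: "cnf \<Rightarrow> cnf \<Rightarrow> bool" where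
  "lc_isomorphic F G \<longleftrightarrow> (\<exists>\<phi>. bij_betw \<phi> (lc_vertices F) (lc_vertices G) \<and>
     (\<forall>u \<in> lc_vertices F. isl (\<phi> u) = isl u) \<and>
     (\<forall>u \<in> lc_vertices F. \<forall>v \<in> lc_vertices F. lc_adj (\<phi> u) (\<phi> v) \<longleftrightarrow> lc_adj u v))"

end

theory Submission
  imports Defs
begin

definition gsw :: "lit \<Rightarrow> lit" where
  "gsw l = (if l = (2,True) then (1,False) else if l = (1,False) then (2,True) else l)"

definition phi :: "lit + clause \<Rightarrow> lit + clause" where
  "phi u = (case u of Inl l \<Rightarrow> Inl (gsw l) | Inr c \<Rightarrow> Inr (gsw ` c))"

lemma gsw_inv: "gsw (gsw l) = l"
  unfolding gsw_def by auto

lemma gsw_inj: "inj gsw"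
  by (metis gsw_inv injI)

lemma phi_inv: "phi (phi u) = u"
  by (cases u) (simp_all add: phi_def gsw_inv image_image)

lemma phi_adj: "lc_adj (phi u) (phi v) \<longleftrightarrow> lc_adj u v"
proof (cases u; cases v)
  fix a b assume "u = Inl a" "v = Inr b"
  then show ?thesis using inj_image_mem_iff[OF gsw_inj]
    by (auto simp: phi_def lc_adj_def)
next
  fix a b assume "u = Inr a" "v = Inl b"
  then show ?thesis using inj_image_mem_iff[OF gsw_inj]
    by (auto simp: phi_def lc_adj_def)
qed (auto simp: phi_def lc_adj_def)

lemma lits2: "lits 2 = {(1,True),(1,False),(2,True),(2,False)}"
  unfolding lits_def by (auto simp: UNIV_bool)

theorem lemma3:
  shows "\<exists>f f'. is_3sat f \<and> is_3sat f' \<and> lc_isomorphic f f' \<and>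
           satisfiable f \<and> \<not> satisfiable f'"
proof (intro exI conjI)
  let ?f = "(2::nat, {{(1::nat,True)}, {(2,True)}})"
  let ?g = "(2::nat, {{(1::nat,True)}, {(1,False)}})"
  show "is_3sat ?f" "is_3sat ?g" by (auto simp: is_3sat_def lits_def)
  show "satisfiable ?f" unfolding satisfiable_def by (rule exI[of _ "\<lambda>_. True"]) auto
  show "\<not> satisfiable ?g" unfolding satisfiable_def by auto
  have gl: "gsw ` lits 2 = lits 2" unfolding lits2 by (auto simp: gsw_def)
  have "phi ` lc_vertices ?f = Inl ` (gsw ` lits 2) \<union> Inr ` {gsw ` {(1,True)}, gsw ` {(2,True)}}"
    unfolding lc_vertices_def by (simp add: phi_def image_Un image_image)
  also have "\<dots> = lc_vertices ?g" unfolding gl lc_vertices_def by (simp add: gsw_def)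
  finally have img: "phi ` lc_vertices ?f = lc_vertices ?g" .
  have bij: "bij_betw phi (lc_vertices ?f) (lc_vertices ?g)"
    unfolding bij_betw_def using img by (metis inj_onI phi_inv)
  show "lc_isomorphic ?f ?g"
    unfolding lc_isomorphic_def
    apply (rule exI[of _ phi])
    using bij phi_adj by (auto simp: phi_def split: sum.split)
qed

end
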